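(* Let $(\mathbf X_i)_{i\in\mathbb N}$ be $\mathbb R^d$-valued random vectors, $\mathcal P=(\mathbf x_1,\dots,\mathbf x_p)$ points of $\mathbb R^d$, and $\mathbf Y_i=(\mathbf 1(\mathbf X_i\le\mathbf x_1),\dots,\mathbf 1(\mathbf X_i\le\mathbf x_p))$. For integers $m\ge1$ and $k\ge m+1$ and $\mathbf x\in\mathbb R^d$ let $$E_m^{\mathbf x}(k)=\max_{j\in\{m,\dots,k-1\}}\frac{j(k-j)}{m^{3/2}}|F_{1:j}(\mathbf x)-F_{j+1:k}(\mathbf x)|,\qquad D_m(k)=\max_{j\in\{m,\dots,k-1\}}\frac{j(k-j)}{m^{3/2}}\|\bar{\mathbf Y}_{1:j}-\bar{\mathbf Y}_{j+1:k}\|_{\Sigma_m^{-1}},$$ where $\Sigma_m$ are $p\times p$ random matrices that are positive definite almost surely for all $m\in\mathbb N$, and $\Sigma_m\to\Sigma$ in probability for some positive-definite matrix $\Sigma$. Let $\eta>0$ and assume that for some $\ell\in\{1,\dots,p\}$, $\sup_{k>m}(m/k)^{\frac32+\eta}E_m^{\mathbf x_\ell}(k)\to\infty$ in probability as $m\to\infty$. Then $\sup_{k>m}(m/k)^{\frac32+\eta}D_m(k)\to\infty$ in probability as $m\to\infty$.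
   Context: Inequalities between vectors are componentwise. For integers $j,k\ge1$, $F_{j:k}(\mathbf x)=\frac1{k-j+1}\sum_{i=j}^k\mathbf 1(\mathbf X_i\le\mathbf x)$ if $j\le k$ and $0$ otherwise; $\bar{\mathbf Y}_{j:k}=\frac1{k-j+1}\sum_{i=j}^k\mathbf Y_i$. For $M$ positive definite, $\|\mathbf y\|_M=\sqrt{(\mathbf y^\top M\mathbf y)/p}$. *)

theory Defs
  imports "HOL-Probability.Probability"
begin

definition vle :: "real^'d \<Rightarrow> real^'d \<Rightarrow> bool" where
  "vle x y \<longleftrightarrow> (\<forall>i. x $ i \<le> y $ i)"

definition Femp :: "(nat \<Rightarrow> 'a \<Rightarrow> real^'d) \<Rightarrow> nat \<Rightarrow> nat \<Rightarrow> real^'d \<Rightarrow> 'a \<Rightarrow> real" where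
  "Femp X j k x w = (if j \<le> k then
      (1 / real (k - j + 1)) * (\<Sum>i=j..k. (if vle (X i w) x then 1 else 0)) else 0)"

definition Yvec :: "(nat \<Rightarrow> 'a \<Rightarrow> real^'d) \<Rightarrow> ('p \<Rightarrow> real^'d) \<Rightarrow> nat \<Rightarrow> 'a \<Rightarrow> real^'p" where
  "Yvec X P i w = (\<chi> l. if vle (X i w) (P l) then 1 else 0)"

definition Ybar :: "(nat \<Rightarrow> 'a \<Rightarrow> real^'d) \<Rightarrow> ('p \<Rightarrow> real^'d) \<Rightarrow> nat \<Rightarrow> nat \<Rightarrow> 'a \<Rightarrow> real^'p" where
  "Ybar X P j k w = (if j \<le> k then
      (1 / real (k - j + 1)) *\<^sub>R (\<Sum>i=j..k. Yvec X P i w) else 0)"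

definition Mnorm :: "real^'p^'p \<Rightarrow> real^'p \<Rightarrow> real" where
  "Mnorm M y = sqrt ((y \<bullet> (M *v y)) / real CARD('p))"

definition pos_def :: "real^'p^'p \<Rightarrow> bool" where
  "pos_def A \<longleftrightarrow> transpose A = A \<and> (\<forall>y. y \<noteq> 0 \<longrightarrow> y \<bullet> (A *v y) > 0)"

definition Estat :: "(nat \<Rightarrow> 'a \<Rightarrow> real^'d) \<Rightarrow> real^'d \<Rightarrow> nat \<Rightarrow> nat \<Rightarrow> 'a \<Rightarrow> real" where
  "Estat X x m k w = Max ((\<lambda>j. real j * real (k - j) / real m powr (3/2) *
      \<bar>Femp X 1 j x w - Femp X (j+1) k x w\<bar>) ` {m..k-1})"

definition Dstat :: "(nat \<Rightarrow> 'a \<Rightarrow> real^'d) \<Rightarrow> ('p \<Rightarrow> real^'d) \<Rightarrow> (nat \<Rightarrow> 'a \<Rightarrow> real^'p^'p)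
     \<Rightarrow> nat \<Rightarrow> nat \<Rightarrow> 'a \<Rightarrow> real" where
  "Dstat X P Sig m k w = Max ((\<lambda>j. real j * real (k - j) / real m powr (3/2) *
      Mnorm (matrix_inv (Sig m w)) (Ybar X P 1 j w - Ybar X P (j+1) k w)) ` {m..k-1})"

definition to_infty_in_prob :: "'a measure \<Rightarrow> (nat \<Rightarrow> 'a \<Rightarrow> ereal) \<Rightarrow> bool" where
  "to_infty_in_prob M S \<longleftrightarrow>
     (\<forall>K::real. (\<lambda>m. measure M {w \<in> space M. ereal K < S m w}) \<longlonglongrightarrow> 1)"

end

theory Submission
  imports Defs
begin

lemma matrix_inv_right:
  fixes A :: "real^'n^'n"
  assumes "invertible A"
  shows "A ** matrix_inv A = mat 1"
  using assms unfolding invertible_def matrix_inv_def by (rule someI2_ex) auto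

lemma inv_formula:
  fixes A :: "real^'n^'n"
  shows "matrix_inv A *v b = (if det A = 0 then (SOME A'::real^'n^'n. False) *v b
     else (\<chi> k. det(\<chi> i j. if j=k then b$i else A$i$j) / det A))"
proof (cases "det A = 0")
  case True
  then have "\<not> invertible A" by (simp add: invertible_det_nz)
  then have "(\<lambda>A'::real^'n^'n. A ** A' = mat 1 \<and> A' ** A = mat 1) = (\<lambda>_. False)"
    unfolding invertible_def by auto
  then have "matrix_inv A = (SOME A'::real^'n^'n. False)"
    unfolding matrix_inv_def by (rule arg_cong)
  then show ?thesis using True by simp
next
  case False
  then have inv: "invertible A" by (simp add: invertible_det_nz)
  have "A *v (matrix_inv A *v b) = b"
    using matrix_inv_right[OF inv] by (simp add: matrix_vector_mul_assoc)
  then show ?thesis using cramer[OF False] False by simp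
qed

lemma meas_det:
  fixes F :: "'a \<Rightarrow> real^'n^'n"
  assumes "\<And>i j. (\<lambda>w. F w $ i $ j) \<in> borel_measurable M"
  shows "(\<lambda>w. det (F w)) \<in> borel_measurable M"
proof -
  note assms[measurable]
  show ?thesis unfolding det_def by measurable
qed

lemma meas_Mnorm_inv:
  fixes S :: "'a \<Rightarrow> real^'n^'n" and v :: "'a \<Rightarrow> real^'n"
  assumes S[measurable]: "\<And>i j. (\<lambda>w. S w $ i $ j) \<in> borel_measurable M"
    and v[measurable]: "\<And>i. (\<lambda>w. v w $ i) \<in> borel_measurable M"
  shows "(\<lambda>w. Mnorm (matrix_inv (S w)) (v w)) \<in> borel_measurable M"
proof -
  define C where "C = (SOME A'::real^'n^'n. False)"
  have eq: "Mnorm (matrix_inv (S w)) (v w) = sqrt ((\<Sum>k\<in>UNIV. v w $ k *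
      (if det (S w) = 0 then (\<Sum>j\<in>UNIV. C $ k $ j * v w $ j)
       else det (\<chi> i j. if j = k then v w $ i else S w $ i $ j) / det (S w))) / real CARD('n))" for w
    unfolding Mnorm_def inv_formula C_def[symmetric]
    by (cases "det (S w) = 0") (simp_all add: inner_vec_def matrix_vector_mult_def)
  have dm[measurable]: "(\<lambda>w. det (\<chi> i j. if j = k then v w $ i else S w $ i $ j)) \<in> borel_measurable M" for k
    by (rule meas_det) simp
  have dS[measurable]: "(\<lambda>w. det (S w)) \<in> borel_measurable M" by (rule meas_det) (rule S)
  show ?thesis unfolding eq by measurable
qed


lemma sym_form:
  fixes A :: "real^'n^'n"
  assumes "transpose A = A"
  shows "u \<bullet> (A *v v) = v \<bullet> (A *v u)"
proof -
  have "u \<bullet> (A *v v) = (u v* A) \<bullet> v" by (simp add: dot_lmul_matrix)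
  also have "u v* A = A *v u"
    by (metis assms transpose_matrix_vector)
  finally show ?thesis by (simp add: inner_commute)
qed

lemma cs_form:
  fixes A :: "real^'n^'n"
  assumes sym: "\<And>u v. u \<bullet> (A *v v) = v \<bullet> (A *v u)"
    and pos: "\<And>x. 0 \<le> x \<bullet> (A *v x)"
  shows "(u \<bullet> (A *v v))^2 \<le> (u \<bullet> (A *v u)) * (v \<bullet> (A *v v))"
proof -
  define a where "a = u \<bullet> (A *v u)"
  define b where "b = u \<bullet> (A *v v)"
  define c where "c = v \<bullet> (A *v v)"
  have q: "0 \<le> a + 2 * t * b + t^2 * c" for t
  proof -
    have "0 \<le> (u + t *\<^sub>R v) \<bullet> (A *v (u + t *\<^sub>R v))" by (rule pos)
    also have "\<dots> = a + t * (u \<bullet> (A *v v)) + t * (v \<bullet> (A *v u)) + t^2 * c"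
      by (simp add: a_def c_def matrix_vector_right_distrib matrix_vector_mult_scaleR
          inner_add_left inner_add_right power2_eq_square algebra_simps)
    also have "\<dots> = a + 2 * t * b + t^2 * c" using sym[of v u] by (simp add: b_def)
    finally show ?thesis .
  qed
  have c0: "0 \<le> c" unfolding c_def by (rule pos)
  show ?thesis
  proof (cases "c = 0")
    case True
    have "b = 0"
    proof (rule ccontr)
      assume "b \<noteq> 0"
      have "0 \<le> a + 2 * (- (a + 1) / (2 * b)) * b" using q[of "- (a + 1) / (2 * b)"] True by simp
      also have "\<dots> = -1" using \<open>b \<noteq> 0\<close> by (simp add: field_simps)
      finally show False by simp
    qed
    then show ?thesis using True by (simp add: b_def c_def)
  next
    case False
    then have cp: "c > 0" using c0 by simp
    have "0 \<le> a + 2 * (- b / c) * b + (- b / c)^2 * c" by (rule q)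
    also have "\<dots> = a - b^2 / c" using cp by (simp add: field_simps power2_eq_square)
    finally have "b^2 / c \<le> a" by simp
    then have "b^2 \<le> a * c" using cp by (simp add: field_simps)
    then show ?thesis by (simp add: a_def b_def c_def)
  qed
qed

lemma posdef_invertible:
  fixes A :: "real^'n^'n"
  assumes "pos_def A"
  shows "invertible A"
proof -
  have "inj ((*v) A)"
  proof (rule injI)
    fix x y assume "A *v x = A *v y"
    then have "A *v (x - y) = 0" by (simp add: matrix_vector_mult_diff_distrib)
    then have "\<not> (x - y) \<bullet> (A *v (x - y)) > 0" by simp
    then show "x = y" using assms unfolding pos_def_def by (metis right_minus_eq)
  qed
  then show ?thesis
    using matrix_left_invertible_injective invertible_left_inverse by blast
qed


lemma matvec_bound:
  fixes A :: "real^'n^'n"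
  assumes "norm A \<le> B"
  shows "norm (A *v y) \<le> real CARD('n) * real CARD('n) * B * norm y"
proof -
  have "norm (A *v y) \<le> onorm ((*v) A) * norm y" by (rule onorm) simp
  also have "onorm ((*v) A) \<le> real CARD('n) * real CARD('n) * B"
  proof (rule onorm_le_matrix_component)
    fix i j
    have "\<bar>A $ i $ j\<bar> \<le> norm (A $ i)" by (rule component_le_norm_cart)
    also have "\<dots> \<le> norm A" by (rule Finite_Cartesian_Product.norm_nth_le)
    finally show "\<bar>A $ i $ j\<bar> \<le> B" using assms by simp
  qed
  finally show ?thesis by (simp add: mult_right_mono)
qed

lemma posdef_inv_bound:
  fixes A :: "real^'n^'n"
  assumes pd: "pos_def A" and nB: "norm A \<le> B"
  shows "(y $ l)^2 \<le> real CARD('n) * real CARD('n) * B * (y \<bullet> (matrix_inv A *v y))"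
proof -
  define C where "C = real CARD('n) * real CARD('n) * B"
  have sym: "\<And>u v. u \<bullet> (A *v v) = v \<bullet> (A *v u)"
    using pd unfolding pos_def_def by (intro sym_form) auto
  have pos: "\<And>x. 0 \<le> x \<bullet> (A *v x)"
    using pd unfolding pos_def_def by (metis inner_zero_left matrix_vector_mult_0_right order_less_imp_le order_refl)
  define z where "z = matrix_inv A *v y"
  have Az: "A *v z = y"
    using matrix_inv_right[OF posdef_invertible[OF pd]]
    by (simp add: z_def matrix_vector_mul_assoc)
  define q where "q = y \<bullet> z"
  have cs: "(z \<bullet> (A *v y))^2 \<le> (z \<bullet> (A *v z)) * (y \<bullet> (A *v y))"
    by (rule cs_form[OF sym pos])
  have e1: "z \<bullet> (A *v y) = y \<bullet> y" using sym[of z y] Az by (simp add: inner_commute)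
  have e2: "z \<bullet> (A *v z) = q" using Az by (simp add: q_def inner_commute)
  have q0: "0 \<le> q" using pos[of z] e2 by simp
  have "y \<bullet> (A *v y) \<le> norm y * norm (A *v y)" by (rule norm_cauchy_schwarz)
  also have "\<dots> \<le> norm y * (C * norm y)"
    using matvec_bound[OF nB, of y] by (simp add: C_def mult_left_mono)
  finally have e3: "y \<bullet> (A *v y) \<le> C * (y \<bullet> y)" by (simp add: power2_norm_eq_inner[symmetric] power2_eq_square mult_ac)
  have "(y \<bullet> y)^2 \<le> q * (y \<bullet> (A *v y))"
    using cs e1 e2 by simp
  also have "\<dots> \<le> q * (C * (y \<bullet> y))"
    using e3 q0 by (rule mult_left_mono)
  finally have "(y \<bullet> y)^2 \<le> q * (C * (y \<bullet> y))" .
  then have yy: "y \<bullet> y \<le> q * C"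
  proof (cases "y \<bullet> y = 0")
    case True
    have B0: "0 \<le> B" using nB norm_ge_zero order_trans by blast
    have C0: "0 \<le> C" by (simp add: C_def B0)
    show ?thesis using True q0 C0 by simp
  next
    case False
    then have "y \<bullet> y > 0" by (simp add: order_less_le)
    moreover assume "(y \<bullet> y)^2 \<le> q * (C * (y \<bullet> y))"
    ultimately show ?thesis by (simp add: power2_eq_square algebra_simps)
  qed
  have "(y $ l)^2 \<le> (norm y)^2"
    using power_mono[OF component_le_norm_cart[of y l] abs_ge_zero, of 2] by simp
  also have "\<dots> = y \<bullet> y" by (simp add: power2_norm_eq_inner)
  finally have "(y $ l)^2 \<le> q * C" using yy by linarith
  then show ?thesis by (simp add: C_def q_def z_def mult_ac)
qed

lemma meas_nth[measurable (raw)]: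
  fixes f :: "'a \<Rightarrow> 'b::real_normed_vector^'n"
  assumes "f \<in> borel_measurable M"
  shows "(\<lambda>x. f x $ i) \<in> borel_measurable M"
  using measurable_compose[OF assms borel_measurable_continuous_onI[OF linear_continuous_on[OF bounded_linear_vec_nth]]]
  by (simp add: o_def)

lemma Ybar_nth: "Ybar X P j k w $ l = Femp X j k (P l) w"
  unfolding Ybar_def Femp_def Yvec_def by simp

lemma pred_vle[measurable]:
  fixes X :: "'a \<Rightarrow> real^'d"
  assumes X: "X \<in> borel_measurable M"
  shows "Measurable.pred M (\<lambda>w. vle (X w) x)"
proof -
  have cl: "closed {y::real^'d. vle y x}"
    unfolding vle_def
    by (intro closed_Collect_all closed_Collect_le linear_continuous_on[OF bounded_linear_vec_nth] continuous_on_const)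
  have "X -` {y. vle y x} \<inter> space M \<in> sets M"
    by (rule measurable_sets[OF X borel_closed[OF cl]])
  moreover have "X -` {y. vle y x} \<inter> space M = {w \<in> space M. vle (X w) x}" by auto
  ultimately show ?thesis unfolding pred_def by simp
qed

lemma meas_Femp[measurable]:
  assumes X[measurable]: "\<And>i. X i \<in> borel_measurable M"
  shows "(\<lambda>w. Femp X j k x w) \<in> borel_measurable M"
  unfolding Femp_def by measurable

lemma Mnorm_bound:
  fixes A :: "real^'n^'n"
  assumes pd: "pos_def A" and nB: "norm A \<le> B" and B0: "0 < B"
  shows "\<bar>y $ l\<bar> / sqrt (real CARD('n) ^ 3 * B) \<le> Mnorm (matrix_inv A) y"
proof -
  define n where "n = real CARD('n)"
  define q where "q = y \<bullet> (matrix_inv A *v y)"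
  have n0: "0 < n" by (simp add: n_def)
  have h: "(y $ l)^2 \<le> n * n * B * q"
    using posdef_inv_bound[OF pd nB, of y l] by (simp add: n_def q_def)
  have "(y $ l)^2 / (n ^ 3 * B) \<le> q / n"
    using h n0 B0 by (simp add: field_simps power3_eq_cube)
  then have "sqrt ((y $ l)^2 / (n ^ 3 * B)) \<le> sqrt (q / n)" by (rule real_sqrt_le_mono)
  then show ?thesis
    by (simp add: Mnorm_def n_def q_def real_sqrt_divide)
qed
lemma D_ge_E:
  fixes Sig :: "nat \<Rightarrow> 'a \<Rightarrow> real^'p^'p" and P :: "'p \<Rightarrow> real^'d"
  assumes pd: "pos_def (Sig m w)" and nB: "norm (Sig m w) \<le> B" and B0: "0 < B" and mk: "m < k"
  shows "(1 / sqrt (real CARD('p) ^ 3 * B)) * Estat X (P l) m k w \<le> Dstat X P Sig m k w"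
proof -
  define c where "c = 1 / sqrt (real CARD('p) ^ 3 * B)"
  have c0: "0 \<le> c" using B0 by (simp add: c_def)
  define S where "S = {m..k-1}"
  have fin: "finite S" and ne: "S \<noteq> {}" using mk by (auto simp: S_def)
  define e where "e = (\<lambda>j. real j * real (k - j) / real m powr (3/2) *
      \<bar>Femp X 1 j (P l) w - Femp X (j+1) k (P l) w\<bar>)"
  define d where "d = (\<lambda>j. real j * real (k - j) / real m powr (3/2) *
      Mnorm (matrix_inv (Sig m w)) (Ybar X P 1 j w - Ybar X P (j+1) k w))"
  have E: "Estat X (P l) m k w = Max (e ` S)" unfolding Estat_def e_def S_def ..
  have D: "Dstat X P Sig m k w = Max (d ` S)" unfolding Dstat_def d_def S_def ..
  have "Max (e ` S) \<in> e ` S" using fin ne by (intro Max_in) auto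
  then obtain j where jS: "j \<in> S" and ej: "Max (e ` S) = e j" by blast
  have a0: "0 \<le> real j * real (k - j) / real m powr (3/2)" by simp
  have "c * \<bar>Femp X 1 j (P l) w - Femp X (j+1) k (P l) w\<bar> \<le>
        Mnorm (matrix_inv (Sig m w)) (Ybar X P 1 j w - Ybar X P (j+1) k w)"
    using Mnorm_bound[OF pd nB B0, of "Ybar X P 1 j w - Ybar X P (j+1) k w" l]
    by (simp add: c_def Ybar_nth)
  then have "real j * real (k - j) / real m powr (3/2) * (c * \<bar>Femp X 1 j (P l) w - Femp X (j+1) k (P l) w\<bar>)
     \<le> real j * real (k - j) / real m powr (3/2) * Mnorm (matrix_inv (Sig m w)) (Ybar X P 1 j w - Ybar X P (j+1) k w)"
    by (rule mult_left_mono[OF _ a0])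
  then have "c * e j \<le> d j"
    unfolding e_def d_def by (simp only: mult_ac)
  also have "d j \<le> Max (d ` S)" using fin jS by simp
  finally show ?thesis using E D ej by (simp add: c_def)
qed

lemma meas_Dstat:
  fixes Sig :: "nat \<Rightarrow> 'a \<Rightarrow> real^'p^'p" and P :: "'p \<Rightarrow> real^'d"
  assumes X[measurable]: "\<And>i. X i \<in> borel_measurable M"
    and S[measurable]: "\<And>m. Sig m \<in> borel_measurable M"
  shows "(\<lambda>w. Dstat X P Sig m k w) \<in> borel_measurable M"
proof -
  have [measurable]: "(\<lambda>w. Mnorm (matrix_inv (Sig m w)) (Ybar X P a b w - Ybar X P a' b' w)) \<in> borel_measurable M"
    for a b a' b'
    by (rule meas_Mnorm_inv) (simp_all add: Ybar_nth)
  show ?thesis unfolding Dstat_def by measurable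
qed

theorem proposition2p4:
  fixes M :: "'a measure"
    and X :: "nat \<Rightarrow> 'a \<Rightarrow> real^('d::finite)"
    and P :: "('p::finite) \<Rightarrow> real^'d"
    and Sig :: "nat \<Rightarrow> 'a \<Rightarrow> real^'p^'p"
    and Sig0 :: "real^'p^'p"
    and \<eta> :: real
    and l :: 'p
  assumes "prob_space M"
    and "\<And>i. X i \<in> borel_measurable M"
    and "\<And>m. Sig m \<in> borel_measurable M"
    and "\<And>m. AE w in M. pos_def (Sig m w)"
    and "pos_def Sig0"
    and "\<And>\<epsilon>. \<epsilon> > 0 \<Longrightarrow>
           (\<lambda>m. measure M {w \<in> space M. norm (Sig m w - Sig0) > \<epsilon>}) \<longlonglongrightarrow> 0"
    and "\<eta> > 0"
    and "to_infty_in_prob M (\<lambda>m w. SUP k\<in>{m<..}.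
           ereal ((real m / real k) powr (3/2 + \<eta>) * Estat X (P l) m k w))"
  shows "to_infty_in_prob M (\<lambda>m w. SUP k\<in>{m<..}.
           ereal ((real m / real k) powr (3/2 + \<eta>) * Dstat X P Sig m k w))"
proof -
  interpret prob_space M by (rule assms(1))
  note Xm[measurable] = assms(2)
  note Sm[measurable] = assms(3)
  define B where "B = norm Sig0 + 1"
  have B0: "0 < B" by (simp add: B_def add_nonneg_pos)
  define c where "c = 1 / sqrt (real CARD('p) ^ 3 * B)"
  have c0: "0 < c" using B0 by (simp add: c_def)
  define r where "r = (\<lambda>m k. (real m / real k) powr (3/2 + \<eta>))"
  have r0: "0 \<le> r m k" for m k by (simp add: r_def)
  define SE where "SE = (\<lambda>m w. SUP k\<in>{m<..}. ereal (r m k * Estat X (P l) m k w))"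
  define SD where "SD = (\<lambda>m w. SUP k\<in>{m<..}. ereal (r m k * Dstat X P Sig m k w))"
  have [measurable]: "(\<lambda>w. Dstat X P Sig m k w) \<in> borel_measurable M" for m k
    by (rule meas_Dstat) (rule Xm, rule Sm)
  have SDm[measurable]: "SD m \<in> borel_measurable M" for m
    unfolding SD_def by measurable
  show ?thesis unfolding to_infty_in_prob_def
  proof
    fix K :: real
    define Ev where "Ev = (\<lambda>m. {w \<in> space M. ereal (K / c) < SE m w})"
    define Dv where "Dv = (\<lambda>m. {w \<in> space M. ereal K < SD m w})"
    define Nv where "Nv = (\<lambda>m. {w \<in> space M. norm (Sig m w - Sig0) > 1})"
    have Dsets: "Dv m \<in> sets M" for m unfolding Dv_def by measurable
    have Nsets: "Nv m \<in> sets M" for m unfolding Nv_def by measurable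
    have E1: "(\<lambda>m. measure M (Ev m)) \<longlonglongrightarrow> 1"
      using assms(8) unfolding to_infty_in_prob_def Ev_def SE_def r_def by blast
    have N0: "(\<lambda>m. measure M (Nv m)) \<longlonglongrightarrow> 0"
      using assms(6)[of 1] unfolding Nv_def by simp
    have low: "(\<lambda>m. measure M (Ev m) - measure M (Nv m)) \<longlonglongrightarrow> 1"
      using tendsto_diff[OF E1 N0] by simp
    have bound: "measure M (Ev m) - measure M (Nv m) \<le> measure M (Dv m)" for m
    proof -
      have "AE w in M. w \<in> Ev m \<longrightarrow> w \<in> Dv m \<union> Nv m"
        using assms(4)[of m]
      proof eventually_elim
        case (elim w)
        show ?case
        proof
          assume wE: "w \<in> Ev m"
          show "w \<in> Dv m \<union> Nv m"
          proof (cases "w \<in> Nv m")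
            case True then show ?thesis by simp
          next
            case False
            then have "norm (Sig m w - Sig0) \<le> 1" using wE by (auto simp: Nv_def Ev_def)
            then have nB: "norm (Sig m w) \<le> B"
              using norm_triangle_sub[of "Sig m w" Sig0] by (simp add: B_def)
            from wE have "ereal (K / c) < SE m w" by (simp add: Ev_def)
            then obtain k where k: "k \<in> {m<..}" and lt: "ereal (K / c) < ereal (r m k * Estat X (P l) m k w)"
              unfolding SE_def by (auto simp: less_SUP_iff)
            have "K / c < r m k * Estat X (P l) m k w" using lt by simp
            then have "K < c * (r m k * Estat X (P l) m k w)" using c0 by (simp add: field_simps)
            also have "\<dots> = r m k * (c * Estat X (P l) m k w)" by (simp add: mult_ac)
            also have "\<dots> \<le> r m k * Dstat X P Sig m k w"
              using D_ge_E[where Sig=Sig and m=m and w=w and B=B and k=k and X=X and l=l and P=P, OF elim nB B0] k r0[of m k]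
              by (intro mult_left_mono) (auto simp: c_def)
            finally have "ereal K < ereal (r m k * Dstat X P Sig m k w)" by simp
            then have "ereal K < SD m w" unfolding SD_def using k by (auto simp: less_SUP_iff)
            then show ?thesis using wE by (simp add: Dv_def Ev_def)
          qed
        qed
      qed
      then have "measure M (Ev m) \<le> measure M (Dv m \<union> Nv m)"
        by (rule finite_measure_mono_AE) (use Dsets Nsets in auto)
      also have "\<dots> \<le> measure M (Dv m) + measure M (Nv m)"
        using Dsets Nsets by (intro measure_subadditive) (auto simp: emeasure_eq_measure)
      finally show ?thesis by simp
    qed
    have up: "measure M (Dv m) \<le> 1" for m by (rule prob_le_1)
    have lim: "(\<lambda>m. measure M (Dv m)) \<longlonglongrightarrow> 1"
      by (rule tendsto_sandwich[OF _ _ low tendsto_const]) (auto intro: always_eventually bound up)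
    show "(\<lambda>m. measure M {w \<in> space M. ereal K < (SUP k\<in>{m<..}.
           ereal ((real m / real k) powr (3/2 + \<eta>) * Dstat X P Sig m k w))}) \<longlonglongrightarrow> 1"
      using lim by (simp add: Dv_def SD_def r_def)
  qed
qed

end
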